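(* Let $\alpha\in(0,1]$, $\lambda_0>0$, and for $\lambda>0$ let $w_n(\lambda)$ be the coefficients of $\sum_{n\ge0}w_n(\lambda)u^n=\frac{\lambda}{\lambda+(1-u)^\alpha}(1-(1-u)^\alpha)$. Then for every $x>0$, with $h=x/n$, $$\lim_{n\to\infty}\frac1h\,w_n(\lambda_0h^\alpha)=\lambda_0x^{\alpha-1}E_{\alpha,\alpha}(-\lambda_0x^\alpha)=\frac{d}{dx}\big[1-E_\alpha(-\lambda_0x^\alpha)\big],$$ the Mittag-Leffler probability density on $(0,\infty)$, whose Laplace transform is $\lambda_0/(\lambda_0+s^\alpha)$.
   Context: $E_{\alpha,\gamma}(z)=\sum_{m\ge0}z^m/\Gamma(\alpha m+\gamma)$, $E_\alpha=E_{\alpha,1}$. *)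

theory Defs
  imports "HOL-Analysis.Analysis" "HOL-Computational_Algebra.Formal_Power_Series"
begin

definition mittag_leffler :: "real \<Rightarrow> real \<Rightarrow> real \<Rightarrow> real" where
  "mittag_leffler a g z = (\<Sum>m. z ^ m / Gamma (a * real m + g))"

definition mittag_leffler1 :: "real \<Rightarrow> real \<Rightarrow> real" where
  "mittag_leffler1 a z = mittag_leffler a 1 z"

definition one_minus_pow_fps :: "real \<Rightarrow> real fps" where
  "one_minus_pow_fps a = Abs_fps (\<lambda>k. (-1) ^ k * (a gchoose k))"

text \<open>Generating function lambda/(lambda + (1-u)^a) * (1 - (1-u)^a) as a formal power series;
  the denominator has constant term lambda + 1, which is nonzero for lambda > 0.\<close>
definition w_fps :: "real \<Rightarrow> real \<Rightarrow> real fps" where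
  "w_fps a lam = fps_const lam * (1 - one_minus_pow_fps a) / (fps_const lam + one_minus_pow_fps a)"

definition w_coeff :: "real \<Rightarrow> real \<Rightarrow> nat \<Rightarrow> real" where
  "w_coeff a lam n = fps_nth (w_fps a lam) n"

end

theory Submission
  imports Defs
begin


definition cc :: "nat \<Rightarrow> real \<Rightarrow> real" where
  "cc n s = pochhammer s n / fact n"

lemma cc_Suc: "cc (Suc n) s = cc n s * (s + real n) / (real n + 1)"
  by (simp add: cc_def pochhammer_Suc field_simps)

lemma cc_nonneg: "0 \<le> s \<Longrightarrow> 0 \<le> cc n s"
proof (induction n)
  case 0 thus ?case by (simp add: cc_def)
next
  case (Suc n) thus ?case by (simp add: cc_Suc)
qed

lemma cc_le_pow: assumes "0 \<le> s" shows "cc n s \<le> (1 + s) ^ n"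
proof (induction n)
  case 0 then show ?case by (simp add: cc_def)
next
  case (Suc n)
  have "(s + real n) / (real n + 1) \<le> 1 + s" using assms
    by (simp add: field_simps)
  moreover have "(s + real n) / (real n + 1) \<ge> 0" using assms by simp
  ultimately have "cc n s * ((s + real n) / (real n + 1)) \<le> (1+s)^n * (1+s)"
    using Suc cc_nonneg[OF assms, of n] by (intro mult_mono) auto
  then show ?case by (simp add: cc_Suc mult.commute)
qed

lemma pow_le_fact_exp: assumes "0 \<le> (y::real)" shows "y ^ N \<le> fact N * exp y"
proof -
  have "(\<lambda>n. y^n /\<^sub>R fact n) sums exp y" by (rule exp_converges)
  hence s: "summable (\<lambda>n. y^n / fact n)" and e: "exp y = (\<Sum>n. y^n / fact n)"
    by (auto simp: sums_iff divide_inverse mult.commute)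
  have "sum (\<lambda>n. y^n / fact n) {N} \<le> (\<Sum>n. y^n / fact n)"
    by (rule sum_le_suminf[OF s]) (use assms in auto)
  hence "y^N / fact N \<le> exp y" using e by simp
  thus ?thesis by (simp add: field_simps)
qed

lemma cc_le_exp: assumes "0 \<le> s" shows "cc n s \<le> fact n * exp (1 + s)"
  using cc_le_pow[OF assms, of n] pow_le_fact_exp[of "1+s" n] assms by linarith

lemma summable_cc:
  assumes "0 \<le> lam" "lam * exp a < 1" "0 \<le> a" "0 \<le> t"
  shows "summable (\<lambda>k. lam ^ k * cc j (a * real k + t))"
proof (rule summable_comparison_test)
  show "summable (\<lambda>k. fact j * exp (1 + t) * (lam * exp a) ^ k)"
    using assms by (intro summable_mult summable_geometric) (auto simp: mult_nonneg_nonneg)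
  show "\<exists>N. \<forall>n\<ge>N. norm (lam ^ n * cc j (a * real n + t)) \<le> fact j * exp (1 + t) * (lam * exp a) ^ n"
  proof (intro exI allI impI)
    fix n :: nat
    have "0 \<le> a * real n + t" using assms by simp
    hence c: "0 \<le> cc j (a * real n + t)" "cc j (a * real n + t) \<le> fact j * exp (1 + (a * real n + t))"
      using cc_nonneg cc_le_exp by auto
    have "exp (1 + (a * real n + t)) = exp (1+t) * exp a ^ n"
      by (simp add: exp_add[symmetric] exp_of_nat_mult[symmetric] algebra_simps)
    hence "lam ^ n * cc j (a * real n + t) \<le> lam ^ n * (fact j * (exp (1+t) * exp a ^ n))"
      using c assms by (intro mult_left_mono) auto
    thus "norm (lam ^ n * cc j (a * real n + t)) \<le> fact j * exp (1 + t) * (lam * exp a) ^ n"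
      using c assms by (simp add: power_mult_distrib algebra_simps)
  qed
qed

lemma Q_nth: "fps_nth (one_minus_pow_fps s) n = (-1)^n * (s gchoose n)"
  by (simp add: one_minus_pow_fps_def)

lemma Q_neg_nth: "fps_nth (one_minus_pow_fps (- s)) n = cc n s"
  by (simp add: Q_nth gbinomial_pochhammer cc_def power_mult_distrib[symmetric])

lemma Q_mult: "one_minus_pow_fps s * one_minus_pow_fps t = one_minus_pow_fps (s + t)"
proof (rule fps_ext)
  fix n
  have "fps_nth (one_minus_pow_fps s * one_minus_pow_fps t) n
     = (\<Sum>i=0..n. (-1)^n * ((s gchoose i) * (t gchoose (n - i))))"
    unfolding fps_mult_nth Q_nth
    by (intro sum.cong refl) (auto simp: power_add[symmetric])
  also have "\<dots> = (-1)^n * ((s + t) gchoose n)"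
    by (simp add: sum_distrib_left[symmetric] gbinomial_Vandermonde)
  finally show "fps_nth (one_minus_pow_fps s * one_minus_pow_fps t) n = fps_nth (one_minus_pow_fps (s + t)) n"
    by (simp add: Q_nth)
qed

lemma Q_0: "one_minus_pow_fps 0 = 1"
  by (rule fps_ext) (case_tac n, simp_all add: Q_nth)

definition Dq :: "real \<Rightarrow> nat \<Rightarrow> real fps" where
  "Dq a k = one_minus_pow_fps (-(a * real k)) - one_minus_pow_fps (a - a * real k)"

lemma Dq_0: "Dq a 0 = 1 - one_minus_pow_fps a"
  by (simp add: Dq_def Q_0)

lemma Dq_Suc_mult: "one_minus_pow_fps a * Dq a (Suc k) = Dq a k"
proof -
  have e1: "a + - (a * real (Suc k)) = - (a * real k)" by (simp add: algebra_simps)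
  have e2: "a + (a - a * real (Suc k)) = a - a * real k" by (simp add: algebra_simps)
  show ?thesis unfolding Dq_def right_diff_distrib Q_mult e1 e2 ..
qed

lemma Dq_Suc_nth: "fps_nth (Dq a (Suc k)) j = cc j (a * real k + a) - cc j (a * real k)"
proof -
  have e1: "- (a * real (Suc k)) = - (a * real k + a)" by (simp add: algebra_simps)
  have e2: "a - a * real (Suc k) = - (a * real k)" by (simp add: algebra_simps)
  show ?thesis unfolding Dq_def fps_sub_nth e1 e2 Q_neg_nth ..
qed

definition Wser :: "real \<Rightarrow> real \<Rightarrow> real fps" where
  "Wser a lam = Abs_fps (\<lambda>j. \<Sum>k. (-1)^k * lam^(k+1) * fps_nth (Dq a (Suc k)) j)"

lemma summable_Wterm:
  assumes "0 \<le> lam" "lam * exp a < 1" "0 \<le> a"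
  shows "summable (\<lambda>k. (-1)^k * lam^(k+1) * fps_nth (Dq a (Suc k)) j)"
proof (rule summable_comparison_test)
  have s1: "summable (\<lambda>k. lam ^ k * cc j (a * real k + a))"
    using assms by (intro summable_cc) auto
  have s2: "summable (\<lambda>k. lam ^ k * cc j (a * real k + 0))"
    using assms by (intro summable_cc) auto
  show "summable (\<lambda>k. lam * (lam ^ k * cc j (a * real k + a)) + lam * (lam ^ k * cc j (a * real k + 0)))"
    by (intro summable_add summable_mult s1 s2)
  show "\<exists>N. \<forall>n\<ge>N. norm ((-1)^n * lam^(n+1) * fps_nth (Dq a (Suc n)) j)
     \<le> lam * (lam ^ n * cc j (a * real n + a)) + lam * (lam ^ n * cc j (a * real n + 0))"
  proof (intro exI allI impI)
    fix n :: nat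
    have c1: "0 \<le> cc j (a * real n + a)" "0 \<le> cc j (a * real n)" using assms by (auto intro!: cc_nonneg)
    have "norm ((-1)^n * lam^(n+1) * fps_nth (Dq a (Suc n)) j)
        = lam^(n+1) * \<bar>cc j (a * real n + a) - cc j (a * real n)\<bar>"
      using assms by (simp add: Dq_Suc_nth abs_mult power_abs)
    also have "\<dots> \<le> lam^(n+1) * (cc j (a * real n + a) + cc j (a * real n))"
      using c1 assms by (intro mult_left_mono) auto
    finally show "norm ((-1)^n * lam^(n+1) * fps_nth (Dq a (Suc n)) j)
     \<le> lam * (lam ^ n * cc j (a * real n + a)) + lam * (lam ^ n * cc j (a * real n + 0))"
      by (simp add: algebra_simps)
  qed
qed

lemma w_fps_eq:
  assumes "0 < lam" "lam * exp a < 1" "0 \<le> a"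
  shows "w_fps a lam = Wser a lam"
proof -
  define V where "V = one_minus_pow_fps a"
  define g where "g = fps_const lam + V"
  define W where "W = Wser a lam"
  define f where "f j k = (-1)^k * lam^(k+1) * fps_nth (Dq a (Suc k)) j" for j k
  have sf: "summable (f j)" for j unfolding f_def using assms by (intro summable_Wterm) auto
  have Wn: "fps_nth W j = suminf (f j)" for j unfolding W_def Wser_def f_def by simp
  have key: "g * W = fps_const lam * (1 - V)"
  proof (rule fps_ext)
    fix j
    define h where "h k = (-1)^k * lam^(k+1) * fps_nth (Dq a k) j" for k
    have "fps_nth (V * W) j = (\<Sum>i=0..j. fps_nth V i * suminf (f (j - i)))"
      by (simp add: fps_mult_nth Wn)
    also have "\<dots> = (\<Sum>i=0..j. \<Sum>k. fps_nth V i * f (j - i) k)"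
      by (intro sum.cong refl suminf_mult[symmetric] sf)
    also have "\<dots> = (\<Sum>k. \<Sum>i=0..j. fps_nth V i * f (j - i) k)"
      by (intro suminf_sum[symmetric] summable_mult sf)
    also have "\<dots> = (\<Sum>k. h k)"
    proof (intro suminf_cong)
      fix k
      have "(\<Sum>i=0..j. fps_nth V i * f (j - i) k)
          = (-1)^k * lam^(k+1) * fps_nth (V * Dq a (Suc k)) j"
        by (simp add: fps_mult_nth f_def sum_distrib_left mult_ac)
      thus "(\<Sum>i=0..j. fps_nth V i * f (j - i) k) = h k"
        by (simp add: h_def V_def Dq_Suc_mult)
    qed
    finally have VW: "fps_nth (V * W) j = suminf h" .
    have "(\<lambda>k. h (Suc k)) = (\<lambda>k. - lam * f j k)"
      by (simp add: h_def f_def mult_ac)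
    hence "(\<lambda>k. h (Suc k)) sums (- lam * suminf (f j))"
      using sums_mult[OF summable_sums[OF sf[of j]], of "- lam"] by simp
    hence "h sums (- lam * suminf (f j) + h 0)" by (simp add: sums_Suc_iff)
    hence "suminf h = - lam * suminf (f j) + lam * fps_nth (1 - V) j"
      by (simp add: sums_iff h_def Dq_0 V_def)
    thus "fps_nth (g * W) j = fps_nth (fps_const lam * (1 - V)) j"
      unfolding g_def distrib_right fps_add_nth VW by (simp add: Wn)
  qed
  have g0: "fps_nth g 0 \<noteq> 0" using assms by (simp add: g_def V_def Q_nth)
  have "w_fps a lam = fps_const lam * (1 - V) / g"
    by (simp add: w_fps_def g_def V_def)
  also have "\<dots> = (fps_const lam * (1 - V)) * inverse g"
    by (rule fps_divide_unit[OF g0])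
  also have "\<dots> = (g * W) * inverse g" by (simp add: key)
  also have "\<dots> = W" using inverse_mult_eq_1'[OF g0] by (simp add: mult.assoc)
  finally show ?thesis by (simp add: W_def)
qed




definition gg :: "nat \<Rightarrow> real \<Rightarrow> real" where
  "gg n s = real n powr (1 - s) * cc n s"

lemma gg_step:
  assumes s: "1 \<le> s" and n: "1 \<le> n"
  shows "gg (Suc n) s \<le> gg n s"
proof -
  define m where "m = real n"
  have m: "1 \<le> m" using n by (simp add: m_def)
  have l1: "ln (m / (m+1)) \<le> m/(m+1) - 1" using m by (intro ln_le_minus_one) auto
  have "ln ((m+1)/m) = - ln (m/(m+1))" using m by (simp add: ln_div)
  hence l2: "1/(m+1) \<le> ln ((m+1)/m)" using l1 m by (simp add: field_simps)
  define R where "R = ((m+1)/m) powr (s-1)"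
  have "R = exp ((s-1) * ln ((m+1)/m))" using m by (simp add: R_def powr_def)
  also have "\<dots> \<ge> exp ((s-1) * (1/(m+1)))" using l2 s by (intro exp_mono mult_left_mono) auto
  finally have "R \<ge> exp ((s-1)/(m+1))" by simp
  moreover have "exp ((s-1)/(m+1)) \<ge> 1 + (s-1)/(m+1)" by (rule exp_ge_add_one_self)
  moreover have "1 + (s-1)/(m+1) = (s+m)/(m+1)" using m by (simp add: field_simps)
  ultimately have R: "(s+m)/(m+1) \<le> R" by linarith
  have Rpos: "0 < R" using m by (simp add: R_def)
  have e: "(m+1) powr (1-s) = m powr (1-s) / R"
  proof -
    have r: "R = (m+1) powr (s-1) / m powr (s-1)" using m by (simp add: R_def powr_divide)
    have i: "(m+1) powr (1-s) = inverse ((m+1) powr (s-1))" "m powr (1-s) = inverse (m powr (s-1))"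
      by (simp_all add: powr_minus[symmetric])
    have p: "(m+1) powr (s-1) > 0" "m powr (s-1) > 0" using m by auto
    show ?thesis unfolding r i using p by (simp add: field_simps)
  qed
  have c: "0 \<le> cc n s" using s by (intro cc_nonneg) auto
  have "gg (Suc n) s = (m+1) powr (1-s) * (cc n s * (s + m) / (m + 1))"
    unfolding gg_def cc_Suc m_def by (simp add: add.commute)
  also have "\<dots> = m powr (1-s) / R * (cc n s * (s + m) / (m + 1))" by (simp only: e)
  also have "\<dots> = m powr (1-s) * cc n s * ((s+m)/(m+1) / R)" by (simp add: mult_ac)
  also have "\<dots> \<le> m powr (1-s) * cc n s * 1"
    using R Rpos c s m by (intro mult_left_mono) (auto simp: divide_le_eq mult.commute)
  finally show ?thesis by (simp add: gg_def m_def)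
qed

lemma gg_mono:
  assumes "1 \<le> s" "1 \<le> N" "N \<le> n"
  shows "gg n s \<le> gg N s"
  using assms(3)
proof (induction n rule: dec_induct)
  case base thus ?case by simp
next
  case (step n) thus ?case using gg_step[OF assms(1), of n] assms(2) by linarith
qed

lemma gg_lim: "(\<lambda>n. gg n s) \<longlonglongrightarrow> rGamma s"
proof -
  have t: "(\<lambda>n. rGamma_series s n * inverse (1 + s * inverse (real n))) \<longlonglongrightarrow> rGamma s * inverse (1 + s * 0)"
    by (intro tendsto_intros lim_inverse_n) auto
  have ev: "eventually (\<lambda>n. rGamma_series s n * inverse (1 + s * inverse (real n)) = gg n s) sequentially"
  proof -
    obtain N :: nat where N: "real N > \<bar>s\<bar> + 1" using reals_Archimedean2 by blast
    show ?thesis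
    proof (rule eventually_sequentiallyI[of N])
      fix n assume "N \<le> n"
      hence n: "real n > \<bar>s\<bar> + 1" using N by linarith
      hence n0: "real n > 0" "s + real n > 0" by auto
      have e1: "rGamma_series s n = cc n s * (s + real n) / real n powr s"
        using n0 by (simp add: rGamma_series_def cc_def pochhammer_Suc powr_def)
      have e2: "inverse (1 + s * inverse (real n)) = real n / (s + real n)"
        using n0 by (simp add: field_simps)
      have e3: "real n powr (1 - s) = real n / real n powr s"
        using n0 by (simp add: powr_diff)
      have P: "real n powr s > 0" using n0 by simp
      have "rGamma_series s n * inverse (1 + s * inverse (real n))
          = cc n s * (s + real n) / real n powr s * (real n / (s + real n))"
        by (simp only: e1 e2)
      also have "\<dots> = real n / real n powr s * cc n s"
      proof -
        have gen: "\<And>q P c N. (q::real) \<noteq> 0 \<Longrightarrow> P \<noteq> 0 \<Longrightarrow> c*q/P*(N/q) = N/P*c" by (simp add: field_simps)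
        show ?thesis using P n0 by (intro gen) auto
      qed
      also have "\<dots> = gg n s" by (simp add: gg_def e3)
      finally show "rGamma_series s n * inverse (1 + s * inverse (real n)) = gg n s" .
    qed
  qed
  show ?thesis using Lim_transform_eventually[OF t ev] by simp
qed

lemma rGamma_le_gg: assumes "1 \<le> s" "1 \<le> N" shows "rGamma s \<le> gg N s"
  by (rule LIMSEQ_le_const2[OF gg_lim]) (use gg_mono[OF assms] in blast)

lemma gg_nonneg: "0 \<le> s \<Longrightarrow> 0 \<le> gg n s"
  by (simp add: gg_def cc_nonneg)




lemma rGamma_real_nonneg: "0 < (s::real) \<Longrightarrow> 0 \<le> rGamma s"
  by (simp add: rGamma_inverse_Gamma less_imp_le)

lemma exists_N_small:
  fixes c d :: real
  assumes "0 < a" and that: "0 < d"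
  shows "\<exists>N::nat. 1 \<le> N \<and> c * real N powr (-a) < d"
proof -
  have "(\<lambda>n. real n powr (-a)) \<longlonglongrightarrow> 0"
    using assms by (intro tendsto_neg_powr filterlim_real_sequentially) auto
  hence "(\<lambda>n. c * real n powr (-a)) \<longlonglongrightarrow> c * 0" by (intro tendsto_intros)
  hence "eventually (\<lambda>n. c * real n powr (-a) < d) sequentially"
    using that by (intro order_tendstoD) auto
  moreover have "eventually (\<lambda>n::nat. 1 \<le> n) sequentially" by (rule eventually_ge_at_top)
  ultimately have "eventually (\<lambda>n. 1 \<le> n \<and> c * real n powr (-a) < d) sequentially"
    by eventually_elim auto
  then obtain N where "\<forall>n\<ge>N. 1 \<le> n \<and> c * real n powr (-a) < d"
    unfolding eventually_sequentially by blast
  thus ?thesis by blast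
qed

lemma summable_ml:
  assumes a: "0 < a"
  shows "summable (\<lambda>m. rGamma (a * real m + 1) * y ^ m)"
proof -
  obtain N :: nat where N: "1 \<le> N" "\<bar>y\<bar> * real N powr (-a) < 1 / exp a"
    using exists_N_small[OF a, of "1 / exp a" "\<bar>y\<bar>"] by auto
  define q where "q = \<bar>y\<bar> * real N powr (-a)"
  have q: "0 \<le> q" "q * exp a < 1" using N by (auto simp: q_def field_simps)
  have s: "summable (\<lambda>m. q ^ m * cc N (a * real m + 1))"
    using q a by (intro summable_cc) auto
  show ?thesis
  proof (rule summable_comparison_test[OF _ s], intro exI allI impI)
    fix m :: nat
    have "0 \<le> a * real m" using a by simp
    hence pos: "0 < a * real m + 1" by linarith
    have "norm (rGamma (a * real m + 1) * y ^ m) = rGamma (a * real m + 1) * \<bar>y\<bar> ^ m"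
      using rGamma_real_nonneg[OF pos] by (simp add: abs_mult power_abs)
    also have "\<dots> \<le> gg N (a * real m + 1) * \<bar>y\<bar> ^ m"
      using a N by (intro mult_right_mono rGamma_le_gg) auto
    also have "gg N (a * real m + 1) = (real N powr (-a)) ^ m * cc N (a * real m + 1)"
    proof -
      have "(real N powr (-a)) ^ m = real N powr (-a * real m)"
        using N by (simp add: powr_realpow[symmetric] powr_powr)
      thus ?thesis by (simp add: gg_def)
    qed
    finally show "norm (rGamma (a * real m + 1) * y ^ m) \<le> q ^ m * cc N (a * real m + 1)"
      by (simp add: q_def power_mult_distrib mult_ac)
  qed
qed

lemma ml1_eq: "mittag_leffler1 a z = (\<Sum>m. rGamma (a * real m + 1) * z ^ m)"
  by (simp add: mittag_leffler1_def mittag_leffler_def rGamma_inverse_Gamma divide_inverse mult.commute)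

lemma deriv_part:
  assumes a: "0 < a" and x: "0 < x"
  shows "((\<lambda>t. 1 - mittag_leffler1 a (- lam0 * t powr a)) has_real_derivative
           lam0 * x powr (a - 1) * mittag_leffler a a (- lam0 * x powr a)) (at x)"
proof -
  define c where "c m = rGamma (a * real m + 1)" for m
  define z where "z = - lam0 * x powr a"
  have sc: "\<And>y. summable (\<lambda>m. c m * y ^ m)" unfolding c_def using a by (rule summable_ml)
  have E: "((\<lambda>z. \<Sum>m. c m * z ^ m) has_field_derivative (\<Sum>m. diffs c m * z ^ m)) (at z)"
    by (rule termdiffs_strong_converges_everywhere[OF sc])
  have U: "((\<lambda>t. - lam0 * t powr a) has_real_derivative (- lam0 * (a * x powr (a - 1)))) (at x)"
    using x by (intro DERIV_cmult has_real_derivative_powr)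
  have D: "((\<lambda>t. 1 - (\<Sum>m. c m * (- lam0 * t powr a) ^ m)) has_real_derivative
            0 - (\<Sum>m. diffs c m * z ^ m) * (- lam0 * (a * x powr (a - 1)))) (at x)"
    using DERIV_chain2[where f="\<lambda>z. \<Sum>m. c m * z ^ m" and g="\<lambda>t. - lam0 * t powr a", OF E[unfolded z_def] U]
    by (intro DERIV_diff DERIV_const) (simp add: z_def)
  have sd: "summable (\<lambda>m. diffs c m * z ^ m)" by (rule termdiff_converges_all[OF sc])
  have "a * (\<Sum>m. diffs c m * z ^ m) = (\<Sum>m. a * (diffs c m * z ^ m))"
    by (rule suminf_mult[OF sd, symmetric])
  also have "\<dots> = (\<Sum>m. z ^ m / Gamma (a * real m + a))"
  proof (intro suminf_cong)
    fix m
    have "a * real (Suc m) * rGamma (a * real (Suc m) + 1) = rGamma (a * real (Suc m))"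
      by (rule rGamma_plus1)
    moreover have "a * real (Suc m) = a * real m + a" by (simp add: algebra_simps)
    ultimately show "a * (diffs c m * z ^ m) = z ^ m / Gamma (a * real m + a)"
      by (simp add: diffs_def c_def rGamma_inverse_Gamma divide_inverse mult_ac)
  qed
  finally have key: "a * (\<Sum>m. diffs c m * z ^ m) = mittag_leffler a a z"
    by (simp add: mittag_leffler_def)
  have fe: "(\<lambda>t. 1 - mittag_leffler1 a (- lam0 * t powr a)) = (\<lambda>t. 1 - (\<Sum>m. c m * (- lam0 * t powr a) ^ m))"
    by (simp add: ml1_eq c_def)
  have "0 - (\<Sum>m. diffs c m * z ^ m) * (- lam0 * (a * x powr (a - 1)))
      = lam0 * x powr (a - 1) * (a * (\<Sum>m. diffs c m * z ^ m))" by (simp add: algebra_simps)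
  also have "\<dots> = lam0 * x powr (a - 1) * mittag_leffler a a (- lam0 * x powr a)"
    using key by (simp add: z_def)
  finally have eqd: "0 - (\<Sum>m. diffs c m * z ^ m) * (- lam0 * (a * x powr (a - 1)))
      = lam0 * x powr (a - 1) * mittag_leffler a a (- lam0 * x powr a)" .
  show ?thesis using D unfolding eqd fe .
qed




lemma powr_mul_self: "0 < (y::real) \<Longrightarrow> y * y powr e = y powr (1 + e)"
  by (simp add: powr_add)

lemma gg_pow_eq:
  assumes "1 \<le> N"
  shows "C ^ k * gg N (a * real k + t) = real N powr (1 - t) * ((C * real N powr (-a)) ^ k * cc N (a * real k + t))"
proof -
  have "(real N powr (-a)) ^ k = real N powr (-a * real k)"
    using assms by (simp add: powr_realpow[symmetric] powr_powr)
  moreover have "real N powr (1 - (a * real k + t)) = real N powr (1 - t) * real N powr (-a * real k)"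
    by (simp add: powr_add[symmetric] algebra_simps)
  ultimately show ?thesis by (simp add: gg_def power_mult_distrib mult_ac)
qed

lemma summable_M:
  assumes "1 \<le> N" "0 \<le> C" "C * real N powr (-a) * exp a < 1" "0 \<le> a" "0 \<le> t"
  shows "summable (\<lambda>k. C ^ k * gg N (a * real k + t))"
  unfolding gg_pow_eq[OF assms(1)]
  using assms by (intro summable_mult summable_cc) auto

lemma limit_part:
  fixes a lam0 x :: real
  assumes a: "0 < a" "a \<le> 1" and l: "0 < lam0" and x: "0 < x"
  shows "(\<lambda>n. (1 / (x / real n)) * w_coeff a (lam0 * (x / real n) powr a) n)
           \<longlonglongrightarrow> lam0 * x powr (a - 1) * mittag_leffler a a (- lam0 * x powr a)"
proof -
  define C where "C = lam0 * x powr a"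
  have C: "0 < C" using l x by (simp add: C_def)
  define A where "A k n = (1/x) * ((-1)^k * C^(k+1) * (gg n (a * real k + a) - real n powr (-a) * gg n (a * real k)))" for k n :: nat
  define B where "B k = (1/x) * ((-1)^k * C^(k+1) * (rGamma (a * real k + a) - 0 * rGamma (a * real k)))" for k :: nat
  have lamn: "lam0 * (x / real n) powr a = C * real n powr (-a)" if "1 \<le> n" for n :: nat
  proof -
    have "(x / real n) powr a = x powr a / real n powr a" using x by (simp add: powr_divide)
    thus ?thesis by (simp add: C_def powr_minus divide_inverse)
  qed
  have ev1: "eventually (\<lambda>n. (1 / (x / real n)) * w_coeff a (lam0 * (x / real n) powr a) n = (\<Sum>k. A k n)) sequentially"
  proof -
    have "(\<lambda>n. C * real n powr (-a)) \<longlonglongrightarrow> C * 0"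
      using a by (intro tendsto_intros tendsto_neg_powr filterlim_real_sequentially) auto
    hence "eventually (\<lambda>n. C * real n powr (-a) < 1 / exp a) sequentially"
      by (intro order_tendstoD) auto
    moreover have "eventually (\<lambda>n::nat. 1 \<le> n) sequentially" by (rule eventually_ge_at_top)
    ultimately show ?thesis
    proof eventually_elim
      case (elim n)
      define lam where "lam = C * real n powr (-a)"
      have lam: "0 < lam" "lam * exp a < 1" using elim C by (auto simp: lam_def field_simps)
      have n: "0 < real n" using elim by simp
      have "w_coeff a (lam0 * (x / real n) powr a) n = fps_nth (Wser a lam) n"
        using lam a by (simp add: w_coeff_def lamn[OF elim(2)] lam_def w_fps_eq)
      also have "\<dots> = (\<Sum>k. (-1)^k * lam^(k+1) * fps_nth (Dq a (Suc k)) n)"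
        by (simp add: Wser_def)
      finally have w: "w_coeff a (lam0 * (x / real n) powr a) n = \<dots>" .
      have sm: "summable (\<lambda>k. (-1)^k * lam^(k+1) * fps_nth (Dq a (Suc k)) n)"
        using lam a by (intro summable_Wterm) auto
      have "(1 / (x / real n)) * w_coeff a (lam0 * (x / real n) powr a) n
          = (\<Sum>k. (1 / (x / real n)) * ((-1)^k * lam^(k+1) * fps_nth (Dq a (Suc k)) n))"
        unfolding w by (rule suminf_mult[OF sm, symmetric])
      also have "\<dots> = (\<Sum>k. A k n)"
      proof (intro suminf_cong)
        fix k :: nat
        have p1: "lam^(k+1) = C^(k+1) * real n powr (-a * real k - a)"
        proof -
          have "(real n powr (-a)) ^ (k+1) = (real n powr (-a)) powr real (k+1)"
            using n by (intro powr_realpow[symmetric]) simp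
          also have "\<dots> = real n powr (-a * real (k+1))" by (rule powr_powr)
          also have "\<dots> = real n powr (-a * real k - a)"
            by (rule arg_cong[where f="\<lambda>e. real n powr e"]) (simp add: algebra_simps)
          finally have e: "(real n powr (-a)) ^ (k+1) = real n powr (-a * real k - a)" .
          have "lam^(k+1) = C^(k+1) * (real n powr (-a)) ^ (k+1)"
            by (simp only: lam_def power_mult_distrib)
          thus ?thesis by (simp only: e)
        qed
        have p2: "real n * real n powr (-a * real k - a) = real n powr (1 - (a * real k + a))"
          unfolding powr_mul_self[OF n]
          by (rule arg_cong[where f="\<lambda>e. real n powr e"]) (simp add: algebra_simps)
        have p3: "real n * real n powr (-a * real k - a) = real n powr (-a) * real n powr (1 - a * real k)"
          unfolding powr_mul_self[OF n] powr_add[symmetric]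
          by (rule arg_cong[where f="\<lambda>e. real n powr e"]) (simp add: algebra_simps)
        have "(1 / (x / real n)) * ((-1)^k * lam^(k+1) * fps_nth (Dq a (Suc k)) n)
            = (1/x) * ((-1)^k * C^(k+1) * ((real n * real n powr (-a * real k - a)) * cc n (a * real k + a)
                 - (real n * real n powr (-a * real k - a)) * cc n (a * real k)))"
          unfolding p1 Dq_Suc_nth by (simp add: algebra_simps)
        also have "\<dots> = A k n"
          unfolding A_def gg_def
          by (subst (1) p2, subst p3) (simp add: mult_ac)
        finally show "(1 / (x / real n)) * ((-1)^k * lam^(k+1) * fps_nth (Dq a (Suc k)) n) = A k n" .
      qed
      finally show ?case .
    qed
  qed
  obtain N0 :: nat where N0: "1 \<le> N0" "C * real N0 powr (-a) < 1 / exp a"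
    using exists_N_small[OF a(1), of "1 / exp a" C] by auto
  have N0': "C * real N0 powr (-a) * exp a < 1" using N0 by (simp add: field_simps)
  obtain K0 :: nat where K0: "1 / a \<le> real K0" using real_arch_simple by blast
  define M where "M k = (1/x) * C * (C^k * gg N0 (a * real k + a) + C^k * gg N0 (a * real k + 0))" for k :: nat
  have lim: "(\<lambda>n. A k n) \<longlonglongrightarrow> B k" for k
  proof -
    have "(\<lambda>n. real n powr (-a)) \<longlonglongrightarrow> 0"
      using a by (intro tendsto_neg_powr filterlim_real_sequentially) auto
    thus ?thesis unfolding A_def B_def by (intro tendsto_intros gg_lim)
  qed
  have bound: "eventually (\<lambda>(k,n). norm (A k n) \<le> M k) (at_top \<times>\<^sub>F sequentially)"
    unfolding eventually_prod_sequentially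
  proof (intro exI[of _ "max N0 K0"] allI impI)
    fix n k :: nat assume n: "max N0 K0 \<le> n" and k: "max N0 K0 \<le> k"
    have ak: "1 \<le> a * real k"
    proof -
      have "1 \<le> a * real K0" using K0 a by (simp add: field_simps)
      also have "\<dots> \<le> a * real k" using k a by (intro mult_left_mono) auto
      finally show ?thesis .
    qed
    have n1: "1 \<le> n" "N0 \<le> n" using n N0 by auto
    have g1: "gg n (a * real k + a) \<le> gg N0 (a * real k + a)"
      using ak a n1 N0 by (intro gg_mono) auto
    have g2: "gg n (a * real k) \<le> gg N0 (a * real k + 0)"
      using ak n1 N0 by (simp add: gg_mono)
    have g0: "0 \<le> gg n (a * real k + a)" "0 \<le> gg n (a * real k)"
      using ak a by (auto intro!: gg_nonneg)
    have pw: "real n powr (-a) \<le> 1" "0 \<le> real n powr (-a)"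
    proof -
      have "1 \<le> real n powr a" using n1 a by (intro ge_one_powr_ge_zero) auto
      thus "real n powr (-a) \<le> 1" "0 \<le> real n powr (-a)"
        by (auto simp: powr_minus intro: inverse_le_1_iff[THEN iffD2])
    qed
    have "norm (A k n) = (1/x) * C^(k+1) * \<bar>gg n (a * real k + a) - real n powr (-a) * gg n (a * real k)\<bar>"
      using x C by (simp add: A_def abs_mult power_abs)
    also have "\<dots> \<le> (1/x) * C^(k+1) * (gg N0 (a * real k + a) + gg N0 (a * real k + 0))"
    proof (intro mult_left_mono)
      have "real n powr (-a) * gg n (a * real k) \<le> 1 * gg n (a * real k)"
        using pw g0 by (intro mult_right_mono) auto
      thus "\<bar>gg n (a * real k + a) - real n powr (-a) * gg n (a * real k)\<bar>
            \<le> gg N0 (a * real k + a) + gg N0 (a * real k + 0)"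
        using g1 g2 g0 pw mult_nonneg_nonneg[OF pw(2) g0(2)] by (simp add: abs_le_iff)
    qed (use x C in auto)
    also have "\<dots> = M k" by (simp add: M_def algebra_simps)
    finally have "norm (A k n) \<le> M k" .
    thus "case (k, n) of (k, n) \<Rightarrow> norm (A k n) \<le> M k" by simp
  qed
  have sM: "summable M"
    unfolding M_def using N0(1) C N0' a
    by (intro summable_mult summable_add summable_M) auto
  from tannerys_theorem[of A B sequentially M, OF lim bound sM]
  have T: "summable (\<lambda>k. norm (B k))" "(\<lambda>n. \<Sum>k. A k n) \<longlonglongrightarrow> (\<Sum>k. B k)" by auto
  define \<kappa> where "\<kappa> = lam0 * x powr (a - 1)"
  have kp: "\<kappa> \<noteq> 0" using l x by (simp add: \<kappa>_def)
  have BT: "B k = \<kappa> * ((- lam0 * x powr a) ^ k / Gamma (a * real k + a))" for k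
  proof -
    have h: "x powr a / x = x powr (a - 1)" using x by (simp add: powr_diff)
    have "B k = (x powr a / x) * lam0 * ((-1)^k * (lam0 * x powr a)^k) * rGamma (a * real k + a)"
      by (simp add: B_def C_def divide_inverse mult_ac)
    also have "\<dots> = \<kappa> * ((- lam0 * x powr a) ^ k / Gamma (a * real k + a))"
    proof -
      have m: "(- lam0 * x powr a)^k = (-1)^k * (lam0 * x powr a)^k"
        unfolding mult_minus_left by (rule power_minus)
      show ?thesis unfolding h \<kappa>_def m by (simp add: rGamma_inverse_Gamma divide_inverse mult_ac)
    qed
    finally show ?thesis .
  qed
  have "summable B" using T(1) by (rule summable_norm_cancel)
  hence "B sums (\<Sum>k. B k)" by (rule summable_sums)
  hence "(\<lambda>k. B k / \<kappa>) sums ((\<Sum>k. B k) / \<kappa>)" by (rule sums_divide)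
  hence "(\<lambda>k. (- lam0 * x powr a) ^ k / Gamma (a * real k + a)) sums ((\<Sum>k. B k) / \<kappa>)"
    using kp by (simp add: BT)
  hence "mittag_leffler a a (- lam0 * x powr a) = (\<Sum>k. B k) / \<kappa>"
    by (simp add: mittag_leffler_def sums_iff)
  hence RHS: "lam0 * x powr (a - 1) * mittag_leffler a a (- lam0 * x powr a) = (\<Sum>k. B k)"
    using kp by (simp add: \<kappa>_def)
  show ?thesis
    unfolding RHS
  proof (rule Lim_transform_eventually[OF T(2)])
    show "\<forall>\<^sub>F n in sequentially. (\<Sum>k. A k n) = (1 / (x / real n)) * w_coeff a (lam0 * (x / real n) powr a) n"
      using ev1 by (rule eventually_mono) (rule sym)
  qed
qed


theorem mainTheorem7:
  fixes a lam0 x :: real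
  assumes "0 < a" and "a \<le> 1" and "0 < lam0" and "0 < x"
  shows "((\<lambda>n. (1 / (x / real n)) * w_coeff a (lam0 * (x / real n) powr a) n)
           \<longlonglongrightarrow> lam0 * x powr (a - 1) * mittag_leffler a a (- lam0 * x powr a))
         \<and> (((\<lambda>t. 1 - mittag_leffler1 a (- lam0 * t powr a)) has_real_derivative
           lam0 * x powr (a - 1) * mittag_leffler a a (- lam0 * x powr a)) (at x))"
  using limit_part[OF assms] deriv_part[OF assms(1) assms(4)] by blast

end
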